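(* Let $S,T\subseteq\{1,\dots,n-1\}$ be nonempty. Let $U_{S,T}=\{s_j-s_i>0 : s_i,s_j\in S\}\cup\{t_j-t_i>0: t_i,t_j\in T\}\cup\{s+t : s\in S, t\in T\}$. Then $\gcd(U_{S,T})=\gcd\{s+t: s\in S, t\in T\}$. *)

theory Defs
  imports Main
begin

definition U_set :: "nat set \<Rightarrow> nat set \<Rightarrow> nat set" where
  "U_set S T =
     {sj - si | si sj. si \<in> S \<and> sj \<in> S \<and> si < sj}
   \<union> {tj - ti | ti tj. ti \<in> T \<and> tj \<in> T \<and> ti < tj}
   \<union> {s + t | s t. s \<in> S \<and> t \<in> T}"

end

theory Submission
  imports Defs
begin

theorem proposition2p2:
  fixes n :: nat and S T :: "nat set"
  assumes "S \<subseteq> {1..n-1}" and "T \<subseteq> {1..n-1}"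
      and "S \<noteq> {}" and "T \<noteq> {}"
  shows "Gcd (U_set S T) = Gcd {s + t | s t. s \<in> S \<and> t \<in> T}"
proof -
  define A where "A = {s + t | s t. s \<in> S \<and> t \<in> T}"
  obtain t0 where t0: "t0 \<in> T" using assms(4) by blast
  obtain s0 where s0: "s0 \<in> S" using assms(3) by blast
  have gA: "\<And>s t. s \<in> S \<Longrightarrow> t \<in> T \<Longrightarrow> Gcd A dvd s + t"
    by (rule Gcd_dvd) (auto simp: A_def)
  have "Gcd A dvd Gcd (U_set S T)"
  proof (rule Gcd_greatest)
    fix u assume "u \<in> U_set S T"
    then consider (a) si sj where "si \<in> S" "sj \<in> S" "u = sj - si"
      | (b) ti tj where "ti \<in> T" "tj \<in> T" "u = tj - ti"
      | (c) s t where "s \<in> S" "t \<in> T" "u = s + t"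
      unfolding U_set_def by blast
    then show "Gcd A dvd u"
    proof cases
      case a
      have "Gcd A dvd (sj + t0) - (si + t0)"
        using gA a t0 by (intro dvd_diff_nat) auto
      then show ?thesis using a by simp
    next
      case b
      have "Gcd A dvd (s0 + tj) - (s0 + ti)"
        using gA b s0 by (intro dvd_diff_nat) auto
      then show ?thesis using b by simp
    next
      case c then show ?thesis using gA by simp
    qed
  qed
  moreover have "Gcd (U_set S T) dvd Gcd A"
  proof (rule Gcd_greatest)
    fix a assume "a \<in> A"
    then have "a \<in> U_set S T" unfolding A_def U_set_def by blast
    then show "Gcd (U_set S T) dvd a" by (rule Gcd_dvd)
  qed
  ultimately show ?thesis unfolding A_def[symmetric] by (rule dvd_antisym[rotated])
qed

end
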